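(* Let $T$ be a tree on $n$ vertices rooted at a vertex $v$. Then there exists a unique $n$-tuple $(F_1,\dots,F_n)$ of symmetric functions in the indeterminates $x_1,x_2,\dots$ such that for every positive integer $c$, $$Z_T(c)=\sum_{i=1}^n x_c^i F_i.$$
   Context: For a graph $G$, a proper coloring is a map $\kappa: V(G)\to\mathbb{N}=\{1,2,\dots\}$ with $\kappa(u)\neq\kappa(w)$ whenever $uw\in E(G)$. With commuting indeterminates $x_1,x_2,\dots$, for a vertex $v$ and color $c\in\mathbb{N}$, $Z_G^v(c)=\sum_{\kappa}\prod_{u\in V(G)}x_{\kappa(u)}$, summed over all proper colorings $\kappa$ of $G$ with $\kappa(v)=c$. For a tree $T$ rooted at $v$, $Z_T(c)$ denotes $Z_T^v(c)$. *)

theory Defs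
  imports Main "HOL-Library.FuncSet"
begin

definition is_tree :: "'a set \<Rightarrow> ('a \<Rightarrow> 'a \<Rightarrow> bool) \<Rightarrow> bool" where
  "is_tree V E \<longleftrightarrow> finite V \<and> V \<noteq> {}
     \<and> (\<forall>u w. E u w \<longrightarrow> u \<in> V \<and> w \<in> V)
     \<and> (\<forall>u w. E u w \<longrightarrow> E w u)
     \<and> (\<forall>u. \<not> E u u)
     \<and> (\<forall>u\<in>V. \<forall>w\<in>V. E\<^sup>*\<^sup>* u w)
     \<and> card {{u, w} | u w. E u w} = card V - 1"

(* Colors and variable indices are 0-based: color/variable j here is j+1 in the paper. *)
definition proper_coloring :: "'a set \<Rightarrow> ('a \<Rightarrow> 'a \<Rightarrow> bool) \<Rightarrow> ('a \<Rightarrow> nat) \<Rightarrow> bool" where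
  "proper_coloring V E \<kappa> \<longleftrightarrow> \<kappa> \<in> V \<rightarrow>\<^sub>E UNIV \<and> (\<forall>u w. E u w \<longrightarrow> \<kappa> u \<noteq> \<kappa> w)"

(* Formal power series in x_0, x_1, ... with integer coefficients:
   a function from exponent vectors (monomials) to coefficients. *)
type_synonym series = "(nat \<Rightarrow> nat) \<Rightarrow> int"

(* exponent vector of the monomial prod_{u in V} x_{kappa u} *)
definition col_monomial :: "'a set \<Rightarrow> ('a \<Rightarrow> nat) \<Rightarrow> (nat \<Rightarrow> nat)" where
  "col_monomial V \<kappa> = (\<lambda>j. card {u \<in> V. \<kappa> u = j})"

definition Zv :: "'a set \<Rightarrow> ('a \<Rightarrow> 'a \<Rightarrow> bool) \<Rightarrow> 'a \<Rightarrow> nat \<Rightarrow> series" where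
  "Zv V E v c = (\<lambda>m. int (card {\<kappa>. proper_coloring V E \<kappa> \<and> \<kappa> v = c \<and> col_monomial V \<kappa> = m}))"

definition symmetric_function :: "series \<Rightarrow> bool" where
  "symmetric_function f \<longleftrightarrow>
     (\<forall>m. infinite {j. m j \<noteq> 0} \<longrightarrow> f m = 0)
     \<and> (\<forall>\<sigma> m. bij \<sigma> \<longrightarrow> f (m \<circ> \<sigma>) = f m)
     \<and> (\<exists>d. \<forall>m. f m \<noteq> 0 \<longrightarrow> (\<Sum>j\<in>{j. m j \<noteq> 0}. m j) \<le> d)"

(* the series x_c^i * f *)
definition mult_var_pow :: "nat \<Rightarrow> nat \<Rightarrow> series \<Rightarrow> series" where
  "mult_var_pow c i f = (\<lambda>m. if i \<le> m c then f (m(c := m c - i)) else 0)"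

end

theory Submission
  imports Defs
begin

definition deg :: "(nat \<Rightarrow> nat) \<Rightarrow> nat" where
  "deg m = sum m {j. m j \<noteq> 0}"

definition zero_of :: "(nat \<Rightarrow> nat) \<Rightarrow> nat" where
  "zero_of m = (LEAST j. m j = 0)"

function GG :: "(nat \<Rightarrow> series) \<Rightarrow> nat \<Rightarrow> series" where
  "GG Z k m = (if finite {j. m j \<noteq> 0}
     then Z (zero_of m) (m(zero_of m := Suc k)) - (\<Sum>i<k. GG Z i (m(zero_of m := k - i)))
     else 0)"
  by auto
termination by (relation "measure (\<lambda>(Z,k,m). k)") auto

declare GG.simps [simp del]

lemma zero_of_ok: assumes "finite {j. m j \<noteq> (0::nat)}" shows "m (zero_of m) = 0"
proof -
  obtain j where "j \<notin> {j. m j \<noteq> 0}" using ex_new_if_finite[OF infinite_UNIV_nat assms] by blast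
  then have "m j = 0" by simp
  then show ?thesis unfolding zero_of_def by (rule LeastI)
qed

lemma supp_upd: "finite {j. (m(c:=a)) j \<noteq> 0} = finite {j. m j \<noteq> (0::nat)}"
proof -
  have "{j. (m(c:=a)) j \<noteq> 0} \<subseteq> insert c {j. m j \<noteq> 0}" "{j. m j \<noteq> 0} \<subseteq> insert c {j. (m(c:=a)) j \<noteq> 0}"
    by auto
  then show ?thesis by (meson finite_insert finite_subset)
qed

lemma supp_comp: assumes "bij \<sigma>" shows "finite {j. (m \<circ> \<sigma>) j \<noteq> 0} = finite {j. m j \<noteq> (0::nat)}"
proof
  assume "finite {j. (m \<circ> \<sigma>) j \<noteq> 0}"
  moreover have "{j. m j \<noteq> 0} = inv \<sigma> -` {j. (m \<circ> \<sigma>) j \<noteq> 0}"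
    using assms by (auto simp: bij_inv_eq_iff[OF assms] surj_f_inv_f bij_is_surj)
  ultimately show "finite {j. m j \<noteq> 0}"
    using finite_vimageI bij_is_inj[OF bij_imp_bij_inv[OF assms]] by metis
next
  assume "finite {j. m j \<noteq> 0}"
  moreover have "{j. (m \<circ> \<sigma>) j \<noteq> 0} = \<sigma> -` {j. m j \<noteq> 0}" by auto
  ultimately show "finite {j. (m \<circ> \<sigma>) j \<noteq> 0}"
    using finite_vimageI bij_is_inj[OF assms] by metis
qed

lemma deg_upd: assumes "finite {j. m j \<noteq> (0::nat)}" "m c = 0"
  shows "deg (m(c:=a)) = deg m + a"
proof (cases "a = 0")
  case True
  then have "m(c:=a) = m" using assms by auto
  then show ?thesis using True by simp
next
  case False
  have s: "{j. (m(c:=a)) j \<noteq> 0} = insert c {j. m j \<noteq> 0}" using False assms by auto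
  have "deg (m(c:=a)) = (m(c:=a)) c + sum (m(c:=a)) {j. m j \<noteq> 0}"
    unfolding deg_def s using assms by (subst sum.insert) auto
  also have "sum (m(c:=a)) {j. m j \<noteq> 0} = sum m {j. m j \<noteq> 0}"
    using assms by (intro sum.cong) auto
  finally show ?thesis unfolding deg_def by simp
qed

lemma deg_ge: assumes "finite {j. m j \<noteq> (0::nat)}" shows "m c \<le> deg m"
proof (cases "m c = 0")
  case False
  then show ?thesis unfolding deg_def using assms by (intro member_le_sum) auto
qed simp

definition swp :: "nat \<Rightarrow> nat \<Rightarrow> nat \<Rightarrow> nat" where
  "swp a b = (\<lambda>x. if x = a then b else if x = b then a else x)"

lemma bij_swp: "bij (swp a b)"
  by (rule o_bij[of "swp a b"]) (auto simp: swp_def fun_eq_iff)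

lemma GG_props:
  assumes P1: "\<And>\<sigma> c m. bij \<sigma> \<Longrightarrow> Z (\<sigma> c) m = Z c (m \<circ> \<sigma>)"
  shows "(\<forall>m c. finite {j. m j \<noteq> 0} \<longrightarrow> m c = 0 \<longrightarrow>
            GG Z k m = Z c (m(c := Suc k)) - (\<Sum>i<k. GG Z i (m(c := k - i))))
         \<and> (\<forall>m \<sigma>. bij \<sigma> \<longrightarrow> GG Z k (m \<circ> \<sigma>) = GG Z k m)"
proof (induction k rule: less_induct)
  case (less k)
  have A: "GG Z k m = Z c (m(c := Suc k)) - (\<Sum>i<k. GG Z i (m(c := k - i)))"
    if fin: "finite {j. m j \<noteq> 0}" and mc: "m c = 0" for m c
  proof -
    define z where "z = zero_of m"
    have mz: "m z = 0" using zero_of_ok[OF fin] z_def by simp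
    have unf: "GG Z k m = Z z (m(z := Suc k)) - (\<Sum>i<k. GG Z i (m(z := k - i)))"
      using fin by (subst GG.simps) (simp add: z_def)
    show ?thesis
    proof (cases "c = z")
      case True then show ?thesis using unf by simp
    next
      case False
      define \<tau> where "\<tau> = swp c z"
      have b: "bij \<tau>" unfolding \<tau>_def by (rule bij_swp)
      have tc: "\<tau> c = z" unfolding \<tau>_def swp_def by simp
      have comp: "m(z := a) \<circ> \<tau> = m(c := a)" for a
        using False mc mz unfolding \<tau>_def swp_def by (auto simp: fun_eq_iff)
      have "Z z (m(z := Suc k)) = Z c (m(c := Suc k))"
        using P1[OF b, of c "m(z := Suc k)"] tc comp by simp
      moreover have "GG Z i (m(z := k - i)) = GG Z i (m(c := k - i))" if "i < k" for i
        using less.IH[OF that] b comp[of "k - i"] by metis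
      ultimately show ?thesis using unf by simp
    qed
  qed
  have B: "GG Z k (m \<circ> \<sigma>) = GG Z k m" if b: "bij \<sigma>" for m \<sigma>
  proof (cases "finite {j. m j \<noteq> 0}")
    case False
    then have "\<not> finite {j. (m \<circ> \<sigma>) j \<noteq> 0}" using supp_comp[OF b] by simp
    then show ?thesis using False by (subst (1 2) GG.simps) simp
  next
    case True
    have fin2: "finite {j. (m \<circ> \<sigma>) j \<noteq> 0}" using supp_comp[OF b] True by simp
    define z where "z = zero_of (m \<circ> \<sigma>)"
    have mz: "m (\<sigma> z) = 0" using zero_of_ok[OF fin2] unfolding z_def o_def .
    have comp: "(m \<circ> \<sigma>)(z := a) = m(\<sigma> z := a) \<circ> \<sigma>" for a
      using bij_is_inj[OF b] by (auto simp: fun_eq_iff inj_eq)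
    have "GG Z k (m \<circ> \<sigma>) = Z z ((m \<circ> \<sigma>)(z := Suc k)) - (\<Sum>i<k. GG Z i ((m \<circ> \<sigma>)(z := k - i)))"
      using fin2 by (subst GG.simps) (simp add: z_def)
    also have "\<dots> = Z (\<sigma> z) (m(\<sigma> z := Suc k)) - (\<Sum>i<k. GG Z i (m(\<sigma> z := k - i)))"
    proof -
      have "Z z ((m \<circ> \<sigma>)(z := Suc k)) = Z (\<sigma> z) (m(\<sigma> z := Suc k))"
        using P1[OF b, of z "m(\<sigma> z := Suc k)"] comp by simp
      moreover have "GG Z i ((m \<circ> \<sigma>)(z := k - i)) = GG Z i (m(\<sigma> z := k - i))" if "i < k" for i
        using less.IH[OF that] b comp[of "k - i"] by metis
      ultimately show ?thesis by simp
    qed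
    also have "\<dots> = GG Z k m" using A[OF True mz] by simp
    finally show ?thesis .
  qed
  show ?case using A B by blast
qed

lemma GG_hom:
  assumes P2: "\<And>c m. Z c m \<noteq> 0 \<Longrightarrow> finite {j. m j \<noteq> 0} \<and> deg m = n"
  shows "GG Z k m \<noteq> 0 \<Longrightarrow> finite {j. m j \<noteq> 0} \<and> deg m + Suc k = n"
proof (induction k arbitrary: m rule: less_induct)
  case (less k)
  show ?case
  proof (cases "finite {j. m j \<noteq> 0}")
    case False
    then show ?thesis using less.prems by (subst (asm) GG.simps) simp
  next
    case True
    define z where "z = zero_of m"
    have mz: "m z = 0" using zero_of_ok[OF True] z_def by simp
    have unf: "GG Z k m = Z z (m(z := Suc k)) - (\<Sum>i<k. GG Z i (m(z := k - i)))"
      using True by (subst GG.simps) (simp add: z_def)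
    show ?thesis
    proof (cases "Z z (m(z := Suc k)) \<noteq> 0")
      case True2: True
      then show ?thesis using P2[OF True2] deg_upd[OF True mz] True by simp
    next
      case False
      then have "(\<Sum>i<k. GG Z i (m(z := k - i))) \<noteq> 0" using less.prems unf by simp
      have "\<exists>i. i < k \<and> GG Z i (m(z := k - i)) \<noteq> 0"
      proof (rule ccontr)
        assume "\<nexists>i. i < k \<and> GG Z i (m(z := k - i)) \<noteq> 0"
        then have "(\<Sum>i<k. GG Z i (m(z := k - i))) = 0" by (intro sum.neutral) auto
        then show False using \<open>(\<Sum>i<k. GG Z i (m(z := k - i))) \<noteq> 0\<close> by simp
      qed
      then obtain i where i: "i < k" "GG Z i (m(z := k - i)) \<noteq> 0" by blast
      have "deg (m(z := k - i)) + Suc i = n" using less.IH[OF i] by blast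
      then show ?thesis using deg_upd[OF True mz] True i by simp
    qed
  qed
qed

lemma sum_single_diff:
  assumes "finite A" "i \<in> A" "\<And>j. j \<in> A - {i} \<Longrightarrow> f j = g j" "sum f A = (sum g A :: int)"
  shows "f i = g i"
proof -
  have "sum f (A - {i}) = sum g (A - {i})" using assms(3) by (rule sum.cong[OF refl])
  then show ?thesis using assms(4) sum.remove[OF assms(1,2), of f] sum.remove[OF assms(1,2), of g] by simp
qed

lemma uniq:
  assumes "length Fs = n" "length Gs = n" "\<forall>F\<in>set Fs. symmetric_function F" "\<forall>F\<in>set Gs. symmetric_function F"
    and eq: "\<And>c m. (\<Sum>i<n. mult_var_pow c (i + 1) (Fs ! i) m) = (\<Sum>i<n. mult_var_pow c (i + 1) (Gs ! i) m)"
  shows "Fs = Gs"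
proof -
  have "\<forall>m. (Fs ! i) m = (Gs ! i) m" if "i < n" for i
    using that
  proof (induction i rule: less_induct)
    case (less i)
    show ?case
    proof
      fix m
      show "(Fs ! i) m = (Gs ! i) m"
      proof (cases "finite {j. m j \<noteq> 0}")
        case False
        have "symmetric_function (Fs ! i)" "symmetric_function (Gs ! i)"
          using assms less.prems by (auto simp: nth_mem)
        then show ?thesis using False unfolding symmetric_function_def by auto
      next
        case True
        define c where "c = zero_of m"
        have mc: "m c = 0" using zero_of_ok[OF True] c_def by simp
        define M where "M = m(c := Suc i)"
        have t: "mult_var_pow c (j + 1) H M = (if j \<le> i then H (m(c := i - j)) else 0)" for j H
          unfolding mult_var_pow_def M_def by auto
        have "mult_var_pow c (i + 1) (Fs ! i) M = mult_var_pow c (i + 1) (Gs ! i) M"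
        proof (rule sum_single_diff[of "{..<n}"])
          show "i \<in> {..<n}" using less.prems by simp
          fix j assume j: "j \<in> {..<n} - {i}"
          show "mult_var_pow c (j + 1) (Fs ! j) M = mult_var_pow c (j + 1) (Gs ! j) M"
          proof (cases "j < i")
            case True
            then show ?thesis unfolding t using less.IH[OF True] j by auto
          next
            case False
            then show ?thesis unfolding t using j by auto
          qed
        qed (rule finite_lessThan, rule eq)
        moreover have "m(c := 0) = m" using mc by auto
        ultimately show ?thesis unfolding t by simp
      qed
    qed
  qed
  then show ?thesis using assms(1,2) by (intro nth_equalityI) auto
qed

lemma abstract:
  assumes P1: "\<And>\<sigma> c m. bij \<sigma> \<Longrightarrow> Z (\<sigma> c) m = Z c (m \<circ> \<sigma>)"
    and P2: "\<And>c m. Z c m \<noteq> 0 \<Longrightarrow> finite {j. m j \<noteq> 0} \<and> deg m = n \<and> m c \<noteq> 0"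
  shows "\<exists>!Fs :: series list. length Fs = n \<and> (\<forall>F\<in>set Fs. symmetric_function F)
           \<and> (\<forall>c. Z c = (\<lambda>m. \<Sum>i<n. mult_var_pow c (i + 1) (Fs ! i) m))"
proof (rule ex_ex1I)
  have P2': "\<And>c m. Z c m \<noteq> 0 \<Longrightarrow> finite {j. m j \<noteq> 0} \<and> deg m = n" using P2 by blast
  have A: "\<And>m c k. finite {j. m j \<noteq> 0} \<Longrightarrow> m c = 0 \<Longrightarrow>
            GG Z k m = Z c (m(c := Suc k)) - (\<Sum>i<k. GG Z i (m(c := k - i)))"
    using GG_props[of Z, OF P1] by blast
  have B: "\<And>m \<sigma> k. bij \<sigma> \<Longrightarrow> GG Z k (m \<circ> \<sigma>) = GG Z k m"
    using GG_props[of Z, OF P1] by blast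
  have H: "\<And>k m. GG Z k m \<noteq> 0 \<Longrightarrow> finite {j. m j \<noteq> 0} \<and> deg m + Suc k = n"
    by (rule GG_hom[of Z, OF P2'])
  have GGinf: "GG Z i m = 0" if "\<not> finite {j. m j \<noteq> 0}" for i m
    using that by (subst GG.simps) simp
  have sym: "symmetric_function (GG Z i)" for i
    unfolding symmetric_function_def
  proof (intro conjI allI impI)
    show "GG Z i m = 0" if "infinite {j. m j \<noteq> 0}" for m using GGinf that by blast
    show "GG Z i (m \<circ> \<sigma>) = GG Z i m" if "bij \<sigma>" for \<sigma> m using B that by blast
    show "\<exists>d. \<forall>m. GG Z i m \<noteq> 0 \<longrightarrow> sum m {j. m j \<noteq> 0} \<le> d"
      using H unfolding deg_def by (intro exI[of _ n]) force
  qed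
  have eqn: "Z c m = (\<Sum>i<n. mult_var_pow c (i + 1) (GG Z i) m)" for c m
  proof (cases "finite {j. m j \<noteq> 0}")
    case False
    then have "Z c m = 0" using P2 by blast
    moreover have "mult_var_pow c (i + 1) (GG Z i) m = 0" for i
    proof -
      have "\<not> finite {j. (m(c:=a)) j \<noteq> 0}" for a using False supp_upd by metis
      then have "GG Z i (m(c:=a)) = 0" for a using GGinf by blast
      then show ?thesis unfolding mult_var_pow_def by simp
    qed
    ultimately show ?thesis by simp
  next
    case True
    define m0 where "m0 = m(c := 0)"
    have fin0: "finite {j. m0 j \<noteq> 0}" using True supp_upd m0_def by metis
    have m0c: "m0 c = 0" by (simp add: m0_def)
    have mm: "m(c := a) = m0(c := a)" for a by (simp add: m0_def)
    have mv: "mult_var_pow c (i + 1) (GG Z i) m = (if i + 1 \<le> m c then GG Z i (m0(c := m c - (i + 1))) else 0)" for i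
      unfolding mult_var_pow_def mm by simp
    consider "m c = 0" | K where "m c = Suc K" "K < n" | "m c > n"
      by (metis not0_implies_Suc not_le not_less_eq_eq)
    then show ?thesis
    proof cases
      case 1
      then have "Z c m = 0" using P2 by blast
      then show ?thesis unfolding mv using 1 by simp
    next
      case (2 K)
      have mK: "m = m0(c := Suc K)" using 2 m0_def by auto
      have "(\<Sum>i<n. mult_var_pow c (i + 1) (GG Z i) m)
          = (\<Sum>i<n. if i \<in> {..K} then GG Z i (m0(c := K - i)) else 0)"
        unfolding mv using 2 by (intro sum.cong) auto
      also have "\<dots> = (\<Sum>i\<in>{..<n} \<inter> {..K}. GG Z i (m0(c := K - i)))"
        by (rule sum.inter_restrict[symmetric]) simp
      also have "{..<n} \<inter> {..K} = {..<Suc K}" using 2 by auto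
      also have "(\<Sum>i<Suc K. GG Z i (m0(c := K - i))) = (\<Sum>i<K. GG Z i (m0(c := K - i))) + GG Z K m0"
        using m0c by (simp add: fun_upd_idem)
      also have "\<dots> = Z c m" using A[OF fin0 m0c, of K] mK by simp
      finally show ?thesis by simp
    next
      case 3
      have "Z c m = 0"
      proof (rule ccontr)
        assume "Z c m \<noteq> 0"
        then have "deg m = n" using P2 by blast
        then show False using deg_ge[OF True, of c] 3 by simp
      qed
      moreover have "mult_var_pow c (i + 1) (GG Z i) m = 0" if "i < n" for i
      proof (rule ccontr)
        assume "mult_var_pow c (i + 1) (GG Z i) m \<noteq> 0"
        then have "GG Z i (m0(c := m c - (i + 1))) \<noteq> 0" unfolding mv by (auto split: if_splits)
        then have "deg (m0(c := m c - (i + 1))) + Suc i = n" using H by blast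
        then show False using deg_upd[OF fin0 m0c] 3 that by simp
      qed
      ultimately show ?thesis by simp
    qed
  qed
  show "\<exists>Fs :: series list. length Fs = n \<and> (\<forall>F\<in>set Fs. symmetric_function F)
           \<and> (\<forall>c. Z c = (\<lambda>m. \<Sum>i<n. mult_var_pow c (i + 1) (Fs ! i) m))"
    by (rule exI[of _ "map (GG Z) [0..<n]"]) (auto simp: sym eqn fun_eq_iff)
next
  fix Fs Gs :: "series list"
  assume "length Fs = n \<and> (\<forall>F\<in>set Fs. symmetric_function F)
           \<and> (\<forall>c. Z c = (\<lambda>m. \<Sum>i<n. mult_var_pow c (i + 1) (Fs ! i) m))"
    "length Gs = n \<and> (\<forall>F\<in>set Gs. symmetric_function F)
           \<and> (\<forall>c. Z c = (\<lambda>m. \<Sum>i<n. mult_var_pow c (i + 1) (Gs ! i) m))"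
  then show "Fs = Gs" by (intro uniq[of Fs n Gs]) (auto simp: fun_eq_iff)
qed


lemma Zv_P1:
  assumes EV: "\<forall>u w. E u w \<longrightarrow> u \<in> V \<and> w \<in> V" and vV: "v \<in> V" and b: "bij \<sigma>"
  shows "Zv V E v (\<sigma> c) m = Zv V E v c (m \<circ> \<sigma>)"
proof -
  define A where "A = {\<kappa>. proper_coloring V E \<kappa> \<and> \<kappa> v = c \<and> col_monomial V \<kappa> = m \<circ> \<sigma>}"
  define B where "B = {\<kappa>. proper_coloring V E \<kappa> \<and> \<kappa> v = \<sigma> c \<and> col_monomial V \<kappa> = m}"
  define f where "f = (\<lambda>\<kappa> u. if u \<in> V then \<sigma> (\<kappa> u) else undefined)"
  define g where "g = (\<lambda>\<kappa> u. if u \<in> V then inv \<sigma> (\<kappa> u) else undefined)"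
  have inj: "inj \<sigma>" using b bij_is_inj by blast
  have ii: "inv \<sigma> (\<sigma> x) = x" for x using inj by simp
  have ss: "\<sigma> (inv \<sigma> x) = x" for x using b by (simp add: bij_is_surj surj_f_inv_f)
  have ext: "\<kappa> u = undefined" if "proper_coloring V E \<kappa>" "u \<notin> V" for \<kappa> u
    using that unfolding proper_coloring_def PiE_def extensional_def by auto
  have "bij_betw f A B"
  proof (rule bij_betw_byWitness[where f'=g])
    show "\<forall>a\<in>A. g (f a) = a" unfolding A_def f_def g_def using ext ii by (auto simp: fun_eq_iff) (metis ext)
    show "\<forall>a\<in>B. f (g a) = a" unfolding B_def f_def g_def using ext ss by (auto simp: fun_eq_iff) (metis ext)
    show "f ` A \<subseteq> B"
    proof
      fix y assume "y \<in> f ` A"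
      then obtain \<kappa> where k: "\<kappa> \<in> A" "y = f \<kappa>" by blast
      have "proper_coloring V E y"
        using k EV inj unfolding A_def f_def proper_coloring_def by (auto simp: inj_eq)
      moreover have "y v = \<sigma> c" using k vV unfolding A_def f_def by simp
      moreover have "col_monomial V y = m"
      proof
        fix j
        have "col_monomial V y j = card {u \<in> V. \<kappa> u = inv \<sigma> j}"
          unfolding col_monomial_def k f_def
          by (rule arg_cong[where f=card]) (auto simp: ss ii)
        also have "\<dots> = col_monomial V \<kappa> (inv \<sigma> j)" by (simp add: col_monomial_def)
        also have "\<dots> = m j" using k ss unfolding A_def by simp
        finally show "col_monomial V y j = m j" .
      qed
      ultimately show "y \<in> B" unfolding B_def by simp
    qed
    show "g ` B \<subseteq> A"
    proof
      fix y assume "y \<in> g ` B"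
      then obtain \<kappa> where k: "\<kappa> \<in> B" "y = g \<kappa>" by blast
      have injv: "inj (inv \<sigma>)" using b bij_imp_bij_inv bij_is_inj by blast
      have "proper_coloring V E y"
        using k EV injv unfolding B_def g_def proper_coloring_def by (auto simp: inj_eq)
      moreover have "y v = c" using k vV ii unfolding B_def g_def by simp
      moreover have "col_monomial V y = m \<circ> \<sigma>"
      proof
        fix j
        have "col_monomial V y j = card {u \<in> V. \<kappa> u = \<sigma> j}"
          unfolding col_monomial_def k g_def
          by (rule arg_cong[where f=card]) (auto simp: ss ii)
        also have "\<dots> = col_monomial V \<kappa> (\<sigma> j)" by (simp add: col_monomial_def)
        also have "\<dots> = (m \<circ> \<sigma>) j" using k unfolding B_def by simp
        finally show "col_monomial V y j = (m \<circ> \<sigma>) j" .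
      qed
      ultimately show "y \<in> A" unfolding A_def by simp
    qed
  qed
  then have "card A = card B" by (rule bij_betw_same_card)
  then show ?thesis unfolding Zv_def A_def B_def by simp
qed

lemma Zv_P2:
  assumes fin: "finite V" and vV: "v \<in> V" and nz: "Zv V E v c m \<noteq> 0"
  shows "finite {j. m j \<noteq> 0} \<and> deg m = card V \<and> m c \<noteq> 0"
proof -
  have "{\<kappa>. proper_coloring V E \<kappa> \<and> \<kappa> v = c \<and> col_monomial V \<kappa> = m} \<noteq> {}"
    using nz unfolding Zv_def by (metis card.empty of_nat_0)
  then obtain \<kappa> where k: "\<kappa> v = c" "col_monomial V \<kappa> = m" by blast
  have mj: "m j = card {u \<in> V. \<kappa> u = j}" for j using k unfolding col_monomial_def by auto
  have supp: "{j. m j \<noteq> 0} = \<kappa> ` V" using fin by (auto simp: mj)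
  have "deg m = (\<Sum>j\<in>\<kappa> ` V. card {u \<in> V. \<kappa> u = j})" unfolding deg_def supp by (simp add: mj)
  also have "\<dots> = card (\<Union>j\<in>\<kappa> ` V. {u \<in> V. \<kappa> u = j})"
    using fin by (intro card_UN_disjoint[symmetric]) auto
  also have "(\<Union>j\<in>\<kappa> ` V. {u \<in> V. \<kappa> u = j}) = V" by auto
  finally have "deg m = card V" .
  moreover have "m c \<noteq> 0" using fin vV k(1) by (auto simp: mj)
  ultimately show ?thesis using supp fin by simp
qed

theorem lemma3p4:
  fixes V :: "'a set" and E :: "'a \<Rightarrow> 'a \<Rightarrow> bool" and v :: 'a and n :: nat
  assumes "is_tree V E" and "v \<in> V" and "card V = n"
  shows "\<exists>!Fs :: series list. length Fs = n \<and> (\<forall>F\<in>set Fs. symmetric_function F)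
           \<and> (\<forall>c. Zv V E v c = (\<lambda>m. \<Sum>i<n. mult_var_pow c (i + 1) (Fs ! i) m))"
proof (rule abstract)
  have fin: "finite V" and EV: "\<forall>u w. E u w \<longrightarrow> u \<in> V \<and> w \<in> V"
    using assms(1) unfolding is_tree_def by auto
  show "\<And>\<sigma> c m. bij \<sigma> \<Longrightarrow> Zv V E v (\<sigma> c) m = Zv V E v c (m \<circ> \<sigma>)"
    using Zv_P1[OF EV assms(2)] by blast
  show "\<And>c m. Zv V E v c m \<noteq> 0 \<Longrightarrow> finite {j. m j \<noteq> 0} \<and> deg m = n \<and> m c \<noteq> 0"
    using Zv_P2[OF fin assms(2)] assms(3) by blast
qed

end
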